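(* Let $(X,\mathbf R)$ be a symmetric association scheme with $D$ classes which is metric with respect to the ordering $A_0,A_1,\dots,A_D$. Fix $x\in X$ and write $E_i^*=E_i^*(x)$. Let $\chi\in V$ be a code, and set $\delta_x=\delta_x(\chi)$ and $s^*=s^*(\chi)$. Then for every $0\le \ell\le D$, the vector $A_\ell\chi$ is a relative $(\delta_x-s^* )$-codesign with respect to $x$; that is, $E_i^*A_\ell\chi\in\mathbb C A_i\hat x$ for all $1\le i\le \delta_x-s^*$.
   Context: $(X,\mathbf R)$, $\mathbf R=\{R_0,\dots,R_D\}$, is a symmetric association scheme with associate matrices $A_0=I,A_1,\dots,A_D$ (the $0/1$ adjacency matrices of the relations $R_i$), Bose–Mesner algebra $M=\mathrm{span}\{A_0,\dots,A_D\}$, and primitive idempotents $E_0=|X|^{-1}J,E_1,\dots,E_D$ of $M$. Metric with respect to $A_0,\dots,A_D$ means $(X,R_1)$ is a distance-regular graph and $R_i$ is the distance-$i$ relation of this graph. $V=\mathbb C^X$ with standard basis $\{\hat y:y\in X\}$ and Hermitian inner product $\langle\hat y,\hat z\rangle=\delta_{yz}$. For $x\in X$, the dual idempotent $E_i^*(x)$ is the diagonal matrix with $(E_i^*(x))_{yy}=(A_i)_{xy}$. A vector $\chi\in V$ is a code if $\chi\notin E_0V$ and $\chi\notin E_0^*(z)V$ for every $z\in X$. $\delta_x(\chi)=\min\{i\ne0:E_i^*(x)\chi\ne0\}$ and $s^*(\chi)=|\{j\ne 0: E_j\chi\ne 0\}|$. A vector $\psi\in V$ is a relative $t$-codesign with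 respect to $x$ if $E_i^*(x)\psi$ and $A_i\hat x$ are linearly dependent for all $1\le i\le t$ (vacuous if $t\le 0$). *)

theory Defs
  imports "HOL-Analysis.Analysis"
begin

text \<open>The point set X is the finite type 'a. Relations R_0,...,R_D are given by
  R :: nat => 'a => 'a => bool (only indices 0..D matter). Vectors in V = C^X are
  complex^'a, matrices are complex^'a^'a.\<close>

definition adj :: "(nat \<Rightarrow> 'a::finite \<Rightarrow> 'a \<Rightarrow> bool) \<Rightarrow> nat \<Rightarrow> complex^'a^'a" where
  "adj R i = (\<chi> y z. if R i y z then 1 else 0)"

definition sym_assoc_scheme :: "nat \<Rightarrow> (nat \<Rightarrow> 'a::finite \<Rightarrow> 'a \<Rightarrow> bool) \<Rightarrow> bool" where
  "sym_assoc_scheme D R \<longleftrightarrow>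
     (\<forall>y z. R 0 y z \<longleftrightarrow> y = z) \<and>
     (\<forall>y z. \<exists>!i. i \<le> D \<and> R i y z) \<and>
     (\<forall>i\<le>D. \<exists>y z. R i y z) \<and>
     (\<forall>i\<le>D. \<forall>y z. R i y z \<longrightarrow> R i z y) \<and>
     (\<forall>i\<le>D. \<forall>j\<le>D. \<forall>k\<le>D. \<exists>p::nat. \<forall>y z. R k y z \<longrightarrow> card {w. R i y w \<and> R j w z} = p)"

definition metric_scheme :: "nat \<Rightarrow> (nat \<Rightarrow> 'a::finite \<Rightarrow> 'a \<Rightarrow> bool) \<Rightarrow> bool" where
  "metric_scheme D R \<longleftrightarrow>
     (\<forall>i\<le>D. \<forall>y z. R i y z \<longleftrightarrow>
        ((y, z) \<in> {(u, v). R 1 u v} ^^ i \<and> (\<forall>j<i. (y, z) \<notin> {(u, v). R 1 u v} ^^ j)))"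

text \<open>E_0,...,E_D are the primitive idempotents of the Bose-Mesner algebra
  M = span{A_0,...,A_D}, with E_0 = |X|^{-1} J.\<close>
definition primitive_idempotents ::
  "nat \<Rightarrow> (nat \<Rightarrow> 'a::finite \<Rightarrow> 'a \<Rightarrow> bool) \<Rightarrow> (nat \<Rightarrow> complex^'a^'a) \<Rightarrow> bool" where
  "primitive_idempotents D R E \<longleftrightarrow>
     (\<forall>j\<le>D. \<exists>c::nat \<Rightarrow> complex. E j = (\<chi> y z. \<Sum>i\<le>D. c i * adj R i $ y $ z)) \<and>
     (\<forall>i\<le>D. \<forall>j\<le>D. E i ** E j = (if i = j then E i else 0)) \<and>
     (\<forall>j\<le>D. E j \<noteq> 0) \<and>
     (\<Sum>j\<le>D. E j) = mat 1 \<and>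
     E 0 = (\<chi> y z. 1 / of_nat CARD('a))"

definition dual_idem :: "(nat \<Rightarrow> 'a::finite \<Rightarrow> 'a \<Rightarrow> bool) \<Rightarrow> 'a \<Rightarrow> nat \<Rightarrow> complex^'a^'a" where
  "dual_idem R x i = (\<chi> y z. if y = z then adj R i $ x $ y else 0)"

definition hat :: "'a::finite \<Rightarrow> complex^'a" where
  "hat x = axis x 1"

definition is_code ::
  "(nat \<Rightarrow> 'a::finite \<Rightarrow> 'a \<Rightarrow> bool) \<Rightarrow> (nat \<Rightarrow> complex^'a^'a) \<Rightarrow> complex^'a \<Rightarrow> bool" where
  "is_code R E cw \<longleftrightarrow> cw \<notin> range (\<lambda>v. E 0 *v v) \<and>
     (\<forall>z. cw \<notin> range (\<lambda>v. dual_idem R z 0 *v v))"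

definition delta_x :: "nat \<Rightarrow> (nat \<Rightarrow> 'a::finite \<Rightarrow> 'a \<Rightarrow> bool) \<Rightarrow> 'a \<Rightarrow> complex^'a \<Rightarrow> nat" where
  "delta_x D R x cw = (LEAST i. i \<noteq> 0 \<and> i \<le> D \<and> dual_idem R x i *v cw \<noteq> 0)"

definition s_star :: "nat \<Rightarrow> (nat \<Rightarrow> complex^'a::finite^'a) \<Rightarrow> complex^'a \<Rightarrow> nat" where
  "s_star D E cw = card {j. j \<noteq> 0 \<and> j \<le> D \<and> E j *v cw \<noteq> 0}"

definition lin_dep2 :: "complex^'a::finite \<Rightarrow> complex^'a \<Rightarrow> bool" where
  "lin_dep2 u v \<longleftrightarrow> (\<exists>a b::complex. (a \<noteq> 0 \<or> b \<noteq> 0) \<and> a *s u + b *s v = 0)"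

text \<open>Relative t-codesign with respect to x (t an integer; vacuous if t <= 0).\<close>
definition rel_codesign ::
  "nat \<Rightarrow> (nat \<Rightarrow> 'a::finite \<Rightarrow> 'a \<Rightarrow> bool) \<Rightarrow> 'a \<Rightarrow> int \<Rightarrow> complex^'a \<Rightarrow> bool" where
  "rel_codesign D R x t \<psi> \<longleftrightarrow>
     (\<forall>i. 1 \<le> i \<and> int i \<le> t \<and> i \<le> D \<longrightarrow>
        lin_dep2 (dual_idem R x i *v \<psi>) (adj R i *v hat x))"

end

theory Submission
  imports Defs
begin

definition mscale :: "complex \<Rightarrow> complex^'n^'m \<Rightarrow> complex^'n^'m" where
  "mscale c A = (\<chi> i j. c * A$i$j)"

interpretation mat: vector_space "mscale :: complex \<Rightarrow> complex^'n^'m \<Rightarrow> _"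
  by unfold_locales (simp_all add: mscale_def vec_eq_iff algebra_simps)

lemma mscale_mv: "mscale c A *v v = c *s (A *v v)"
  by (simp add: mscale_def vec_eq_iff matrix_vector_mult_def sum_distrib_left mult.assoc)

lemma sum_mv: "(\<Sum>i\<in>I. f i) *v v = (\<Sum>i\<in>I. f i *v v)"
  by (induction I rule: infinite_finite_induct) (auto simp: matrix_vector_mult_add_rdistrib)

lemma mscale_mm: "mscale c A ** B = mscale c (A ** B)"
  by (simp add: mscale_def vec_eq_iff matrix_matrix_mult_def sum_distrib_left mult.assoc)

lemma add_mm: "(A + B) ** (C::'b::semiring_1^'n^'m) = A ** C + B ** C"
  by (simp add: vec_eq_iff matrix_matrix_mult_def sum.distrib distrib_right)

lemma sum_mm: "(\<Sum>i\<in>I. f i) ** B = (\<Sum>i\<in>I. f i ** B)"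
  by (induction I rule: infinite_finite_induct) (auto simp: add_mm)

lemma mv_scale: "A *v (c *s v) = c *s (A *v (v::complex^'n))"
  by (simp add: vec_eq_iff matrix_vector_mult_def sum_distrib_left algebra_simps)

lemma mscale_eq0: "mscale c A = 0 \<Longrightarrow> A \<noteq> 0 \<Longrightarrow> c = 0"
  by (auto simp: mscale_def vec_eq_iff)

lemma scheme_parts:
  assumes "sym_assoc_scheme D R"
  shows "\<forall>y z. R 0 y z \<longleftrightarrow> y = z" "\<forall>y z. \<exists>!i. i \<le> D \<and> R i y z"
    "\<forall>i\<le>D. \<exists>y z. R i y z" "\<forall>i\<le>D. \<forall>y z. R i y z \<longrightarrow> R i z y"
    "\<forall>i\<le>D. \<forall>j\<le>D. \<forall>k\<le>D. \<exists>p::nat. \<forall>y z. R k y z \<longrightarrow> card {w. R i y w \<and> R j w z} = p"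
  using assms unfolding sym_assoc_scheme_def by simp_all

lemma scheme_ex: "sym_assoc_scheme D R \<Longrightarrow> \<exists>i\<le>D. R i y z"
proof -
  assume "sym_assoc_scheme D R"
  from scheme_parts(2)[OF this] have "\<exists>!i. i \<le> D \<and> R i y z" by simp
  thus ?thesis by (rule ex1E) blast
qed

lemma scheme_uniq: "sym_assoc_scheme D R \<Longrightarrow> R i y z \<Longrightarrow> R j y z \<Longrightarrow> i \<le> D \<Longrightarrow> j \<le> D \<Longrightarrow> i = j"
proof -
  assume "sym_assoc_scheme D R" "R i y z" "R j y z" "i \<le> D" "j \<le> D"
  moreover from scheme_parts(2)[OF this(1)] have "\<exists>!i. i \<le> D \<and> R i y z" by simp
  ultimately show ?thesis by (metis (no_types, lifting))
qed

lemma scheme_sym: "sym_assoc_scheme D R \<Longrightarrow> i \<le> D \<Longrightarrow> R i y z \<Longrightarrow> R i z y"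
  using scheme_parts(4) by blast

lemma scheme_0: "sym_assoc_scheme D R \<Longrightarrow> R 0 y z \<longleftrightarrow> y = z"
  using scheme_parts(1) by blast

lemma metric_iff: "metric_scheme D R \<Longrightarrow> i \<le> D \<Longrightarrow>
   R i y z \<longleftrightarrow> ((y, z) \<in> {(u, v). R 1 u v} ^^ i \<and> (\<forall>j<i. (y, z) \<notin> {(u, v). R 1 u v} ^^ j))"
  unfolding metric_scheme_def by blast

lemma tri:
  assumes S: "sym_assoc_scheme D R" and M: "metric_scheme D R"
    and "i \<le> D" "j \<le> D" "k \<le> D" "R i y w" "R j w z" "R k y z"
  shows "k \<le> i + j"
proof (rule ccontr)
  let ?G = "{(u, v). R 1 u v}"
  assume "\<not> k \<le> i + j"
  have a: "(y, w) \<in> ?G ^^ i" using metric_iff[OF M assms(3)] assms(6) by simp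
  have b: "(w, z) \<in> ?G ^^ j" using metric_iff[OF M assms(4)] assms(7) by simp
  have "(y, z) \<in> ?G ^^ (i + j)" unfolding relpow_add using a b by (rule relcompI)
  moreover have "\<forall>j'<k. (y, z) \<notin> ?G ^^ j'" using metric_iff[OF M assms(5)] assms(8) by simp
  moreover have "i + j < k" using \<open>\<not> k \<le> i + j\<close> by simp
  ultimately show False by blast
qed

lemma step:
  assumes S: "sym_assoc_scheme D R" and M: "metric_scheme D R"
    and "m < D" "R (Suc m) y z"
  shows "\<exists>w. R 1 y w \<and> R m w z"
proof -
  let ?G = "{(u, v). R 1 u v}"
  have "(y, z) \<in> ?G ^^ (1 + m)" using metric_iff[OF M, of "Suc m"] assms(3,4) by simp
  then obtain w where w1: "(y, w) \<in> ?G ^^ 1" and w2: "(w, z) \<in> ?G ^^ m"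
    unfolding relpow_add by blast
  have R1: "R 1 y w" using w1 by simp
  obtain j where j: "j \<le> D" "R j w z" using scheme_ex[OF S] by blast
  have "\<forall>j'<j. (w, z) \<notin> ?G ^^ j'" using metric_iff[OF M j(1)] j(2) by simp
  hence "j \<le> m" using w2 by (metis not_le)
  moreover have "Suc m \<le> 1 + j" using tri[OF S M _ j(1) _ R1 j(2) assms(4)] assms(3) by simp
  ultimately have "j = m" by simp
  thus ?thesis using R1 j by blast
qed

lemma ind_sum: "(\<Sum>w\<in>UNIV. (if P w then 1 else 0) * (if Q w then 1 else (0::complex))) = of_nat (card {w::'a::finite. P w \<and> Q w})"
proof -
  have "(\<Sum>w\<in>UNIV. (if P w then 1 else 0) * (if Q w then 1 else (0::complex))) = (\<Sum>w\<in>UNIV. if P w \<and> Q w then 1 else 0)"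
    by (rule sum.cong) auto
  also have "\<dots> = of_nat (card {w. P w \<and> Q w})" by (simp add: sum.If_cases)
  finally show ?thesis .
qed


lemma rec:
  assumes S: "sym_assoc_scheme D R" and M: "metric_scheme D R" and m: "m \<le> D" and D1: "1 \<le> D"
  shows "\<exists>p. adj R 1 ** adj R m = (\<Sum>k\<le>min (Suc m) D. mscale (p k) (adj R k)) \<and> (m < D \<longrightarrow> p (Suc m) \<noteq> 0)"
proof -
  have "\<forall>k\<le>D. \<exists>p::nat. \<forall>y z. R k y z \<longrightarrow> card {w. R 1 y w \<and> R m w z} = p"
    using scheme_parts(5)[OF S] D1 m by blast
  then obtain pn where pn: "\<And>k y z. k \<le> D \<Longrightarrow> R k y z \<Longrightarrow> card {w. R 1 y w \<and> R m w z} = pn k"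
    by metis
  define p where "p k = (of_nat (pn k) :: complex)" for k
  have "adj R 1 ** adj R m = (\<Sum>k\<le>min (Suc m) D. mscale (p k) (adj R k))"
  proof (rule vec_eq_iff[THEN iffD2], intro allI, rule vec_eq_iff[THEN iffD2], intro allI)
    fix y z
    have L: "(adj R 1 ** adj R m) $ y $ z = of_nat (card {w. R 1 y w \<and> R m w z})"
      by (simp add: matrix_matrix_mult_def adj_def ind_sum)
    obtain d where d: "d \<le> D" "R d y z" using scheme_ex[OF S] by blast
    have Rr: "(\<Sum>k\<le>min (Suc m) D. mscale (p k) (adj R k)) $ y $ z
        = (\<Sum>k\<le>min (Suc m) D. if k = d then p d else 0)"
      unfolding sum_component
      by (rule sum.cong) (auto simp: mscale_def adj_def d dest: scheme_uniq[OF S _ d(2) _ d(1)])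
    show "(adj R 1 ** adj R m) $ y $ z = (\<Sum>k\<le>min (Suc m) D. mscale (p k) (adj R k)) $ y $ z"
    proof (cases "d \<le> Suc m")
      case True
      then show ?thesis unfolding L Rr using d pn p_def by simp
    next
      case False
      have "{w. R 1 y w \<and> R m w z} = {}"
      proof (rule ccontr)
        assume "{w. R 1 y w \<and> R m w z} \<noteq> {}"
        then obtain w where "R 1 y w" "R m w z" by blast
        from tri[OF S M D1 m d(1) this d(2)] False show False by simp
      qed
      then show ?thesis unfolding L Rr using False by simp
    qed
  qed
  moreover have "m < D \<longrightarrow> p (Suc m) \<noteq> 0"
  proof
    assume mD: "m < D"
    obtain y z where yz: "R (Suc m) y z" using scheme_parts(3)[OF S] mD by (meson Suc_leI)
    obtain w where "R 1 y w \<and> R m w z" using step[OF S M mD yz] by blast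
    hence "{w. R 1 y w \<and> R m w z} \<noteq> {}" by blast
    hence c0: "card {w. R 1 y w \<and> R m w z} \<noteq> 0" by simp
    have "pn (Suc m) \<noteq> 0" using c0 pn[OF Suc_leI[OF mD] yz] by metis
    thus "p (Suc m) \<noteq> 0" by (simp add: p_def)
  qed
  ultimately show ?thesis by blast
qed

definition onev :: "complex^'a" where "onev = (\<chi> y. 1)"

lemma val:
  assumes S: "sym_assoc_scheme D R" and D1: "1 \<le> D"
  shows "\<exists>c. adj R 1 *v onev = c *s onev"
proof -
  obtain p :: nat where p: "\<And>y z. R 0 y z \<Longrightarrow> card {w. R 1 y w \<and> R 1 w z} = p"
    using scheme_parts(5)[OF S] D1 by blast
  have "adj R 1 *v onev = of_nat p *s onev"
  proof (rule vec_eq_iff[THEN iffD2], intro allI)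
    fix y
    have "{w. R 1 y w \<and> R 1 w y} = {w. R 1 y w}" using scheme_sym[OF S D1] by blast
    moreover have "R 0 y y" using scheme_0[OF S] by simp
    ultimately have "card {w. R 1 y w} = p" using p by metis
    moreover have "(adj R 1 *v onev) $ y = of_nat (card {w. R 1 y w})"
      by (simp add: matrix_vector_mult_def adj_def onev_def sum.If_cases)
    ultimately show "(adj R 1 *v onev) $ y = (of_nat p *s onev) $ y" by (simp add: onev_def)
  qed
  thus ?thesis by blast
qed

lemma span_E:
  assumes P: "primitive_idempotents D R E" and k: "k \<le> D"
  shows "adj R k \<in> mat.span (E ` {..D})"
proof -
  have orth: "\<And>i j. i \<le> D \<Longrightarrow> j \<le> D \<Longrightarrow> E i ** E j = (if i = j then E i else 0)"
    and nz: "\<And>j. j \<le> D \<Longrightarrow> E j \<noteq> 0"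
    and inM: "\<And>j. j \<le> D \<Longrightarrow> \<exists>c::nat \<Rightarrow> complex. E j = (\<chi> y z. \<Sum>i\<le>D. c i * adj R i $ y $ z)"
    using P unfolding primitive_idempotents_def by blast+
  have inj: "inj_on E {..D}"
  proof (rule inj_onI)
    fix i j assume ij: "i \<in> {..D}" "j \<in> {..D}" "E i = E j"
    show "i = j"
    proof (rule ccontr)
      assume "i \<noteq> j"
      have "E i = E i ** E i" using orth[of i i] ij by simp
      also have "\<dots> = E i ** E j" using ij by simp
      also have "\<dots> = 0" using orth[of i j] ij \<open>i \<noteq> j\<close> by simp
      finally show False using nz ij by simp
    qed
  qed
  have indep: "mat.independent (E ` {..D})"
    unfolding mat.independent_explicit_finite_subsets
  proof (intro allI impI ballI)
    fix T u v assume T: "T \<subseteq> E ` {..D}" "finite T" and su: "(\<Sum>v\<in>T. mscale (u v) v) = 0" and v: "v \<in> T"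
    obtain j where j: "j \<le> D" "v = E j" using T v by blast
    have "0 = (\<Sum>v\<in>T. mscale (u v) v) ** E j" using su by simp
    also have "\<dots> = (\<Sum>w\<in>T. mscale (u w) (w ** E j))" by (simp add: sum_mm mscale_mm)
    also have "\<dots> = (\<Sum>w\<in>T. if w = v then mscale (u v) (E j) else 0)"
    proof (rule sum.cong)
      fix w assume w: "w \<in> T"
      obtain i where i: "i \<le> D" "w = E i" using T w by blast
      show "mscale (u w) (w ** E j) = (if w = v then mscale (u v) (E j) else 0)"
      proof (cases "w = v")
        case True
        then show ?thesis using orth[OF j(1) j(1)] j by simp
      next
        case False
        then have "i \<noteq> j" using i j by auto
        then have "w ** E j = 0" using orth[OF i(1) j(1)] i by simp
        moreover have "mscale (u w) (0::complex^'a^'a) = 0" by (simp add: mscale_def vec_eq_iff)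
        ultimately show ?thesis using False by simp
      qed
    qed simp
    also have "\<dots> = mscale (u v) (E j)" using T(2) v by simp
    finally show "u v = 0" using mscale_eq0 nz[OF j(1)] by metis
  qed
  have sub: "E ` {..D} \<subseteq> mat.span (adj R ` {..D})"
  proof
    fix B assume "B \<in> E ` {..D}"
    then obtain j where j: "j \<le> D" "B = E j" by blast
    obtain c where c: "E j = (\<chi> y z. \<Sum>i\<le>D. c i * adj R i $ y $ z)" using inM[OF j(1)] by blast
    have "E j = (\<Sum>i\<le>D. mscale (c i) (adj R i))" unfolding c by (simp add: vec_eq_iff mscale_def)
    also have "\<dots> \<in> mat.span (adj R ` {..D})"
      by (intro mat.span_sum mat.span_scale mat.span_base) auto
    finally show "B \<in> mat.span (adj R ` {..D})" using j by simp
  qed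
  show ?thesis
  proof (rule ccontr)
    assume nin: "adj R k \<notin> mat.span (E ` {..D})"
    have "mat.independent (insert (adj R k) (E ` {..D}))" using mat.independent_insertI[OF nin indep] .
    moreover have "adj R k \<in> mat.span (adj R ` {..D})"
      using k by (intro mat.span_base) simp
    hence "insert (adj R k) (E ` {..D}) \<subseteq> mat.span (adj R ` {..D})"
      using sub by (simp only: insert_subset)
    ultimately have "card (insert (adj R k) (E ` {..D})) \<le> card (adj R ` {..D})"
      using mat.independent_span_bound[of "adj R ` {..D}"] by simp
    also have "\<dots> \<le> Suc D" using card_image_le[of "{..D}" "adj R"] by simp
    finally have "card (insert (adj R k) (E ` {..D})) \<le> Suc D" .
    moreover have "adj R k \<notin> E ` {..D}" using nin mat.span_base by metis
    hence "card (insert (adj R k) (E ` {..D})) = Suc (Suc D)" using card_image[OF inj] by simp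
    ultimately show False by simp
  qed
qed


lemma dual_entry: "(dual_idem R x i *v v) $ y = (if R i x y then v $ y else 0)"
proof -
  have "(dual_idem R x i *v v) $ y = (\<Sum>z\<in>UNIV. (if y = z then adj R i $ x $ y else 0) * v $ z)"
    unfolding matrix_vector_mult_def dual_idem_def vec_lambda_beta by (rule refl)
  also have "\<dots> = (\<Sum>z\<in>UNIV. if z = y then (if R i x y then v $ y else 0) else 0)"
    by (rule sum.cong) (auto simp: adj_def)
  also have "\<dots> = (if R i x y then v $ y else 0)" by simp
  finally show ?thesis .
qed

lemma hat_entry: "(adj R i *v hat x) $ y = (if R i y x then 1 else 0)"
proof -
  have "(adj R i *v hat x) $ y = (\<Sum>z\<in>UNIV. adj R i $ y $ z * axis x 1 $ z)"
    unfolding matrix_vector_mult_def hat_def vec_lambda_beta by (rule refl)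
  also have "\<dots> = (\<Sum>z\<in>UNIV. if z = x then (if R i y x then 1 else 0) else 0)"
    by (rule sum.cong) (auto simp: adj_def axis_def)
  also have "\<dots> = (if R i y x then 1 else 0)" by simp
  finally show ?thesis .
qed

lemma adj_entry: "(adj R k *v v) $ y = (\<Sum>z\<in>UNIV. if R k y z then v $ z else 0)"
  unfolding matrix_vector_mult_def adj_def by (auto intro!: sum.cong)


theorem theorem3p2:
  fixes D :: nat and R :: "nat \<Rightarrow> 'a::finite \<Rightarrow> 'a \<Rightarrow> bool"
    and E :: "nat \<Rightarrow> complex^'a^'a" and x :: 'a and cw :: "complex^'a" and l :: nat
  assumes "sym_assoc_scheme D R"
    and "metric_scheme D R"
    and "primitive_idempotents D R E"
    and "is_code R E cw"
    and "l \<le> D"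
  shows "rel_codesign D R x (int (delta_x D R x cw) - int (s_star D E cw)) (adj R l *v cw)"
proof (cases "D = 0")
  case True
  then show ?thesis by (simp add: rel_codesign_def)
next
  case False
  hence D1: "1 \<le> D" by simp
  note S = assms(1) and M = assms(2) and P = assms(3)
  define A where "A = adj R"
  define Sj where "Sj = {j. j \<noteq> 0 \<and> j \<le> D \<and> E j *v cw \<noteq> 0}"
  define s where "s = s_star D E cw"
  have s_card: "s = card Sj" by (simp add: s_def s_star_def Sj_def)
  have finSj: "finite Sj" unfolding Sj_def by (rule finite_subset[of _ "{..D}"]) auto
  define H where "H = insert onev ((\<lambda>j. E j *v cw) ` Sj)"
  define G where "G m = insert onev ((\<lambda>k. A k *v cw) ` {k. k < m \<and> k \<le> D})" for m
  have finH: "finite H" using finSj by (simp add: H_def)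
  have "card ((\<lambda>j. E j *v cw) ` Sj) \<le> card Sj" by (rule card_image_le[OF finSj])
  hence cardH: "card H \<le> Suc s" unfolding H_def s_card using finSj by (simp add: card_insert_if)
  have E0: "E 0 = (\<chi> y z. 1 / of_nat CARD('a))" using P by (simp add: primitive_idempotents_def)
  have "E 0 *v cw = (\<Sum>z\<in>UNIV. 1 / of_nat CARD('a) * cw $ z) *s onev"
    unfolding E0 by (simp add: vec_eq_iff matrix_vector_mult_def onev_def)
  hence E0cw: "E 0 *v cw \<in> vec.span H"
    by (metis H_def insertI1 vec.span_base vec.span_scale)
  have T: "A k *v cw \<in> vec.span H" if k: "k \<le> D" for k
  proof -
    have inspan: "A k \<in> mat.span (E ` {..D})" using span_E[OF P k] A_def by simp
    have sub: "mat.subspace {B. B *v cw \<in> vec.span H}"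
    proof (rule mat.subspaceI)
      show "0 \<in> {B. B *v cw \<in> vec.span H}" by (simp add: vec.span_zero)
    next
      fix B C assume "B \<in> {B. B *v cw \<in> vec.span H}" "C \<in> {B. B *v cw \<in> vec.span H}"
      then show "B + C \<in> {B. B *v cw \<in> vec.span H}"
        unfolding mem_Collect_eq matrix_vector_mult_add_rdistrib by (rule vec.span_add)
    next
      fix c B assume "B \<in> {B. B *v cw \<in> vec.span H}"
      then show "mscale c B \<in> {B. B *v cw \<in> vec.span H}"
        unfolding mem_Collect_eq mscale_mv by (rule vec.span_scale)
    qed
    have gen: "B *v cw \<in> vec.span H" if "B \<in> E ` {..D}" for B
    proof -
      from that obtain j where j0: "j \<in> {..D}" "B = E j" by (rule imageE) 
      hence j: "j \<le> D" "B = E j" by auto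
      show ?thesis
      proof (cases "j = 0")
        case True then show ?thesis using E0cw j by simp
      next
        case False
        show ?thesis
        proof (cases "E j *v cw = 0")
          case True then show ?thesis using j by (simp add: vec.span_zero)
        next
          case nz: False
          hence "j \<in> Sj" using False j by (simp add: Sj_def)
          then show ?thesis using j by (intro vec.span_base) (simp add: H_def)
        qed
      qed
    qed
    show ?thesis using mat.span_induct[of "A k" "E ` {..D}" "\<lambda>B. B *v cw \<in> vec.span H", OF inspan _ gen]
      sub by simp
  qed
  have GsubH: "G m \<subseteq> vec.span H" for m
  proof
    fix g assume "g \<in> G m"
    then consider "g = onev" | k where "k < m" "k \<le> D" "g = A k *v cw" by (auto simp: G_def)
    then show "g \<in> vec.span H"
    proof cases
      case 1 then show ?thesis by (simp add: H_def vec.span_base)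
    next
      case 2 then show ?thesis using T by simp
    qed
  qed
  have dimG: "vec.dim (G m) \<le> Suc s" for m
    by (rule le_trans[OF vec.dim_le_card[OF GsubH[of m] finH] cardH])
  have Gmono: "m \<le> m' \<Longrightarrow> G m \<subseteq> G m'" for m m' by (auto simp: G_def)
  have GSuc: "G (Suc n) = (if n \<le> D then insert (A n *v cw) (G n) else G n)" for n
    by (auto simp: G_def less_Suc_eq)
  obtain cv where cv: "A 1 *v onev = cv *s onev" using val[OF S D1] A_def by blast
  have A1map: "A 1 *v v \<in> vec.span (G (Suc m))" if v: "v \<in> vec.span (G m)" for m v
  proof -
    have sub: "vec.subspace {v. A 1 *v v \<in> vec.span (G (Suc m))}"
    proof (rule vec.subspaceI)
      show "0 \<in> {v. A 1 *v v \<in> vec.span (G (Suc m))}" by (simp add: vec.span_zero)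
    next
      fix u v assume "u \<in> {v. A 1 *v v \<in> vec.span (G (Suc m))}" "v \<in> {v. A 1 *v v \<in> vec.span (G (Suc m))}"
      then show "u + v \<in> {v. A 1 *v v \<in> vec.span (G (Suc m))}"
        unfolding mem_Collect_eq matrix_vector_right_distrib by (rule vec.span_add)
    next
      fix c v assume "v \<in> {v. A 1 *v v \<in> vec.span (G (Suc m))}"
      then show "c *s v \<in> {v. A 1 *v v \<in> vec.span (G (Suc m))}"
        unfolding mem_Collect_eq mv_scale by (rule vec.span_scale)
    qed
    have gen: "A 1 *v g \<in> vec.span (G (Suc m))" if "g \<in> G m" for g
    proof -
      from that consider "g = onev" | k where "k < m" "k \<le> D" "g = A k *v cw" by (auto simp: G_def)
      then show ?thesis
      proof cases
        case 1 then show ?thesis using cv by (auto simp: G_def intro: vec.span_scale vec.span_base)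
      next
        case 2
        obtain p where p: "A 1 ** A k = (\<Sum>k'\<le>min (Suc k) D. mscale (p k') (A k'))"
          using rec[OF S M 2(2) D1] A_def by blast
        have "A 1 *v g = (\<Sum>k'\<le>min (Suc k) D. p k' *s (A k' *v cw))"
          using p 2(3) by (simp add: matrix_vector_mul_assoc sum_mv mscale_mv)
        also have "\<dots> \<in> vec.span (G (Suc m))"
        proof (intro vec.span_sum vec.span_scale vec.span_base)
          fix k' assume "k' \<in> {..min (Suc k) D}"
          then show "A k' *v cw \<in> G (Suc m)" using 2 unfolding G_def by (intro insertI2 imageI) auto
        qed
        finally show ?thesis .
      qed
    qed
    show ?thesis using vec.span_induct[of v "G m" "\<lambda>v. A 1 *v v \<in> vec.span (G (Suc m))", OF v _ gen] sub
      by simp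
  qed
  have STAB: "vec.span (G (Suc (Suc m))) = vec.span (G (Suc m))"
    if st: "vec.span (G (Suc m)) = vec.span (G m)" for m
  proof (cases "Suc m \<le> D")
    case False then show ?thesis by (simp add: GSuc[of "Suc m"])
  next
    case True
    hence mD: "m < D" by simp
    obtain p where p: "A 1 ** A m = (\<Sum>k\<le>min (Suc m) D. mscale (p k) (A k))" and pn: "p (Suc m) \<noteq> 0"
      using rec[OF S M _ D1, of m] mD A_def by auto
    have "min (Suc m) D = Suc m" using True by simp
    hence p2: "A 1 ** A m = (\<Sum>k\<le>m. mscale (p k) (A k)) + mscale (p (Suc m)) (A (Suc m))" using p by simp
    have eq1: "A 1 *v (A m *v cw) = (\<Sum>k\<le>m. p k *s (A k *v cw)) + p (Suc m) *s (A (Suc m) *v cw)"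
      unfolding matrix_vector_mul_assoc p2 by (simp add: matrix_vector_mult_add_rdistrib sum_mv mscale_mv)
    have "A m *v cw \<in> vec.span (G (Suc m))" using mD by (intro vec.span_base) (simp add: G_def)
    hence "A m *v cw \<in> vec.span (G m)" using st by simp
    hence i1: "A 1 *v (A m *v cw) \<in> vec.span (G (Suc m))" by (rule A1map)
    have i2: "(\<Sum>k\<le>m. p k *s (A k *v cw)) \<in> vec.span (G (Suc m))"
    proof (intro vec.span_sum vec.span_scale vec.span_base)
      fix k assume "k \<in> {..m}"
      then show "A k *v cw \<in> G (Suc m)" using mD unfolding G_def by (intro insertI2 imageI) auto
    qed
    have eqp: "p (Suc m) *s (A (Suc m) *v cw) = A 1 *v (A m *v cw) - (\<Sum>k\<le>m. p k *s (A k *v cw))"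
      unfolding eq1 by (rule add_diff_cancel_left'[symmetric])
    have "p (Suc m) *s (A (Suc m) *v cw) \<in> vec.span (G (Suc m))" unfolding eqp by (rule vec.span_diff[OF i1 i2])
    hence "(1 / p (Suc m)) *s (p (Suc m) *s (A (Suc m) *v cw)) \<in> vec.span (G (Suc m))" by (rule vec.span_scale)
    hence "A (Suc m) *v cw \<in> vec.span (G (Suc m))" using pn by (simp add: vector_smult_assoc)
    then show ?thesis using True by (simp add: GSuc[of "Suc m"] vec.span_redundant)
  qed
  have propg: "vec.span (G (Suc (m + n))) = vec.span (G (m + n))"
    if h: "vec.span (G (Suc m)) = vec.span (G m)" for n m
    by (induction n) (use h STAB in auto)
  have stab: "vec.span (G (Suc s)) = vec.span (G s)"
  proof (rule ccontr)
    assume ns: "vec.span (G (Suc s)) \<noteq> vec.span (G s)"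
    have strict: "vec.span (G m) \<subset> vec.span (G (Suc m))" if ms: "m \<le> s" for m
    proof -
      have "vec.span (G m) \<subseteq> vec.span (G (Suc m))" by (rule vec.span_mono) (simp add: Gmono)
      moreover have "vec.span (G (Suc m)) \<noteq> vec.span (G m)"
      proof
        assume "vec.span (G (Suc m)) = vec.span (G m)"
        from propg[OF this, of "s - m"] ms ns show False by simp
      qed
      ultimately show ?thesis by blast
    qed
    have dimlow: "m \<le> Suc s \<Longrightarrow> Suc m \<le> vec.dim (G m)" for m
    proof (induction m)
      case 0
      have "G 0 = {onev}" by (simp add: G_def)
      moreover have "onev \<noteq> 0" by (simp add: onev_def vec_eq_iff)
      ultimately show ?case using vec.dim_eq_card_independent[of "{onev}"] by simp
    next
      case (Suc m)
      hence "Suc m \<le> vec.dim (G m)" by simp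
      moreover have "vec.dim (G m) < vec.dim (G (Suc m))" using Suc.prems by (intro vec.dim_psubset strict) simp
      ultimately show ?case by simp
    qed
    from dimlow[of "Suc s"] dimG[of "Suc s"] show False by simp
  qed
  have allstab: "vec.span (G (s + n)) = vec.span (G s)" for n
  proof (induction n)
    case 0 then show ?case by simp
  next
    case (Suc n)
    then show ?case using propg[OF stab, of n] by simp
  qed
  have Almem: "A l *v cw \<in> vec.span (G s)"
  proof -
    have mem: "A l *v cw \<in> vec.span (G (Suc l))" using assms(5) by (intro vec.span_base) (simp add: G_def)
    show ?thesis
    proof (cases "Suc l \<le> s")
      case True then show ?thesis using mem vec.span_mono[OF Gmono[OF True]] by blast
    next
      case False
      hence "Suc l = s + (Suc l - s)" by simp
      then show ?thesis using mem allstab[of "Suc l - s"] by metis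
    qed
  qed
  show ?thesis
    unfolding rel_codesign_def
  proof (intro allI impI)
    fix i assume i: "1 \<le> i \<and> int i \<le> int (delta_x D R x cw) - int (s_star D E cw) \<and> i \<le> D"
    hence iD: "i \<le> D" and il: "int i \<le> int (delta_x D R x cw) - int s" by (auto simp: s_def)
    define Es where "Es = dual_idem R x i"
    define w where "w = A i *v hat x"
    have sub: "vec.subspace {v. \<exists>c. Es *v v = c *s w}"
    proof (rule vec.subspaceI)
      show "0 \<in> {v. \<exists>c. Es *v v = c *s w}" by (auto intro!: exI[of _ 0] simp: vec_eq_iff)
    next
      fix u v assume "u \<in> {v. \<exists>c. Es *v v = c *s w}" "v \<in> {v. \<exists>c. Es *v v = c *s w}"
      then obtain c1 c2 where "Es *v u = c1 *s w" "Es *v v = c2 *s w" by blast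
      then show "u + v \<in> {v. \<exists>c. Es *v v = c *s w}"
        by (auto intro!: exI[of _ "c1 + c2"] simp: matrix_vector_right_distrib vector_sadd_rdistrib)
    next
      fix c v assume "v \<in> {v. \<exists>c. Es *v v = c *s w}"
      then obtain c1 where "Es *v v = c1 *s w" by blast
      then show "c *s v \<in> {v. \<exists>c. Es *v v = c *s w}"
        by (auto intro!: exI[of _ "c * c1"] simp: mv_scale vector_smult_assoc)
    qed
    have gen: "\<exists>c. Es *v g = c *s w" if "g \<in> G s" for g
    proof -
      from that consider "g = onev" | k where "k < s" "k \<le> D" "g = A k *v cw" by (auto simp: G_def)
      then show ?thesis
      proof cases
        case 1
        have "Es *v g = 1 *s w"
          unfolding vec_eq_iff
        proof
          fix y
          show "(Es *v g) $ y = (1 *s w) $ y"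
            using 1 scheme_sym[OF S iD, of x y] scheme_sym[OF S iD, of y x]
            by (auto simp: Es_def w_def A_def dual_entry hat_entry onev_def)
        qed
        then show ?thesis by blast
      next
        case 2
        have zero: "cw $ z = 0" if xy: "R i x y" and yz: "R k y z" and zx: "z \<noteq> x" for y z
        proof -
          obtain j where j: "j \<le> D" "R j x z" using scheme_ex[OF S] by blast
          have j0: "j \<noteq> 0" proof
            assume "j = 0"
            then have "x = z" using j(2) scheme_0[OF S] by simp
            then show False using zx by simp
          qed
          have "j \<le> i + k" using tri[OF S M iD 2(2) j(1) xy yz j(2)] .
          hence "j < delta_x D R x cw" using il 2(1) by linarith
          hence "\<not> (j \<noteq> 0 \<and> j \<le> D \<and> dual_idem R x j *v cw \<noteq> 0)"
            unfolding delta_x_def by (rule not_less_Least)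
          hence "dual_idem R x j *v cw = 0" using j0 j(1) by blast
          hence "(dual_idem R x j *v cw) $ z = 0" by simp
          then show ?thesis using j(2) by (simp add: dual_entry)
        qed
        have "Es *v g = (if i = k then cw $ x else 0) *s w"
          unfolding vec_eq_iff
        proof
          fix y
          show "(Es *v g) $ y = ((if i = k then cw $ x else 0) *s w) $ y"
          proof (cases "R i x y")
            case False
            then show ?thesis using scheme_sym[OF S iD, of y x]
              by (auto simp: Es_def w_def A_def dual_entry hat_entry)
          next
            case True
            have "(A k *v cw) $ y = (\<Sum>z\<in>UNIV. if z = x then (if R k y x then cw $ x else 0) else 0)"
              unfolding A_def adj_entry by (rule sum.cong) (use zero[OF True] in auto)
            also have "\<dots> = (if R k y x then cw $ x else 0)" by simp
            finally have ak: "(A k *v cw) $ y = (if R k y x then cw $ x else 0)" .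
            have kk: "R k y x \<longleftrightarrow> i = k"
              using scheme_uniq[OF S True _ iD 2(2)] scheme_sym[OF S 2(2), of y x] scheme_sym[OF S iD, of x y] True
              by auto
            have "R i y x" using scheme_sym[OF S iD True] .
            then show ?thesis using True ak kk 2(3)
              by (simp add: Es_def w_def A_def dual_entry hat_entry)
          qed
        qed
        then show ?thesis by blast
      qed
    qed
    obtain c where c: "Es *v (A l *v cw) = c *s w"
      using vec.span_induct[of "A l *v cw" "G s" "\<lambda>v. \<exists>c. Es *v v = c *s w", OF Almem _ gen] sub by auto
    show "lin_dep2 (dual_idem R x i *v (adj R l *v cw)) (adj R i *v hat x)"
      unfolding lin_dep2_def using c
      by (intro exI[of _ 1] exI[of _ "-c"]) (simp add: Es_def w_def A_def vec_eq_iff)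
  qed
qed

end
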